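(* Let $G$ be a finite group, let $\mathcal{H}$ be a finite-dimensional Hilbert space, and let $f: G \to U(\mathcal{H})$ be an arbitrary function (not necessarily a homomorphism). Then there exist a finite-dimensional Hilbert space $\mathcal{H}'$, an isometry $V: \mathcal{H} \to \mathcal{H}'$, and a unitary representation $\pi: G \to U(\mathcal{H}')$ of $G$ such that for every probability measure $\mu$ on $G$, every normalised density operator $\psi$ on $\mathcal{H}$, and every $\epsilon \ge 0$: \[ \mathbb{E}_{g \sim \mu,\, h \sim G} \| f(h) f(g) - f(hg) \|_\psi^2 \leq \epsilon \quad\Longrightarrow\quad \mathbb{E}_{g \sim \mu} \| f(g) - V^\dagger \pi(g) V \|_\psi^2 \leq \epsilon, \] where $h \sim G$ denotes a uniformly random element of $G$. (Note that $V$ and $\pi$ depend only on $f$, not on $\mu$, $\psi$ or $\epsilon$.)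
   Context: $U(\mathcal{H})$ denotes the set of unitary operators on $\mathcal{H}$. For a positive semidefinite operator $\psi$ on $\mathcal{H}$ and a linear operator $A$ on $\mathcal{H}$, the state-dependent (semi)norm is $\|A\|_\psi^2 := \mathrm{Tr}[A^\dagger A \psi]$. *)

theory Defs
  imports "Jordan_Normal_Form.Schur_Decomposition" "HOL-Algebra.Group"
begin

text \<open>Finite-dimensional Hilbert spaces are modelled as \<open>\<complex>^n\<close>; operators as complex matrices.
  \<open>mat_adjoint\<close> is the conjugate transpose.\<close>

definition unitary_mat :: "nat \<Rightarrow> complex mat \<Rightarrow> bool" where
  "unitary_mat n U \<longleftrightarrow> U \<in> carrier_mat n n \<and> mat_adjoint U * U = 1\<^sub>m n \<and> U * mat_adjoint U = 1\<^sub>m n"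

definition isometry_mat :: "nat \<Rightarrow> nat \<Rightarrow> complex mat \<Rightarrow> bool" where
  "isometry_mat n m V \<longleftrightarrow> V \<in> carrier_mat m n \<and> mat_adjoint V * V = 1\<^sub>m n"

definition psd_mat :: "nat \<Rightarrow> complex mat \<Rightarrow> bool" where
  "psd_mat n \<psi> \<longleftrightarrow> \<psi> \<in> carrier_mat n n \<and>
     (\<forall>v \<in> carrier_vec n. Im (conjugate v \<bullet> (\<psi> *\<^sub>v v)) = 0 \<and> Re (conjugate v \<bullet> (\<psi> *\<^sub>v v)) \<ge> 0)"

definition mat_trace :: "complex mat \<Rightarrow> complex" where
  "mat_trace A = (\<Sum>i < dim_row A. A $$ (i, i))"

definition density_op :: "nat \<Rightarrow> complex mat \<Rightarrow> bool" where
  "density_op n \<psi> \<longleftrightarrow> psd_mat n \<psi> \<and> mat_trace \<psi> = 1"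

text \<open>\<open>\<parallel>A\<parallel>_\<psi>^2 = Tr[A^\<dagger> A \<psi>]\<close> (real for psd \<psi>).\<close>
definition state_norm_sq :: "complex mat \<Rightarrow> complex mat \<Rightarrow> real" where
  "state_norm_sq A \<psi> = Re (mat_trace (mat_adjoint A * A * \<psi>))"

definition unitary_rep :: "('g, 'b) monoid_scheme \<Rightarrow> nat \<Rightarrow> ('g \<Rightarrow> complex mat) \<Rightarrow> bool" where
  "unitary_rep G m \<pi> \<longleftrightarrow> (\<forall>g \<in> carrier G. unitary_mat m (\<pi> g)) \<and>
     (\<forall>g \<in> carrier G. \<forall>h \<in> carrier G. \<pi> (g \<otimes>\<^bsub>G\<^esub> h) = \<pi> g * \<pi> h)"

definition prob_weights :: "('g, 'b) monoid_scheme \<Rightarrow> ('g \<Rightarrow> real) \<Rightarrow> bool" where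
  "prob_weights G \<mu> \<longleftrightarrow> (\<forall>g \<in> carrier G. \<mu> g \<ge> 0) \<and> (\<Sum>g \<in> carrier G. \<mu> g) = 1"

end

theory Submission
  imports Defs
begin


lemma adj_eq: "mat_adjoint A = mat (dim_col A) (dim_row A) (\<lambda>(i,j). cnj (A $$ (j,i)))"
  by (rule eq_matI) (auto simp: mat_adjoint_def mat_of_rows_index)

lemma adj_index[simp]: "i < dim_col A \<Longrightarrow> j < dim_row A \<Longrightarrow> mat_adjoint A $$ (i,j) = cnj (A $$ (j,i))"
  by (simp add: adj_eq)
lemma adj_dim[simp]: "dim_row (mat_adjoint (A::complex mat)) = dim_col A" "dim_col (mat_adjoint A) = dim_row A"
  unfolding adj_eq by simp_all

definition Bf :: "nat \<Rightarrow> (nat\<Rightarrow>nat\<Rightarrow>complex) \<Rightarrow> (nat\<Rightarrow>nat\<Rightarrow>complex) \<Rightarrow> complex mat \<Rightarrow> complex" where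
"Bf n X Y \<psi> = (\<Sum>i<n. \<Sum>j<n. \<Sum>l<n. cnj (X j i) * Y j l * \<psi> $$ (l,i))"

lemma sn_Bf: assumes "A \<in> carrier_mat n n" "\<psi> \<in> carrier_mat n n"
  shows "state_norm_sq A \<psi> = Re (Bf n (\<lambda>j i. A$$(j,i)) (\<lambda>j i. A$$(j,i)) \<psi>)"
proof -
  have "mat_trace (mat_adjoint A * A * \<psi>) = (\<Sum>i<n. \<Sum>l<n. \<Sum>j<n. cnj (A $$ (j,i)) * A $$ (j,l) * \<psi> $$ (l,i))"
    using assms unfolding mat_trace_def
    by (auto simp: scalar_prod_def sum_distrib_right lessThan_atLeast0 intro!: sum.cong)
  also have "\<dots> = Bf n (\<lambda>j i. A$$(j,i)) (\<lambda>j i. A$$(j,i)) \<psi>"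
    unfolding Bf_def by (intro sum.cong refl sum.swap)
  finally show ?thesis unfolding state_norm_sq_def by simp
qed

lemma Bf_pos: assumes "psd_mat n \<psi>" shows "0 \<le> Re (Bf n Y Y \<psi>)"
proof -
  have "Bf n Y Y \<psi> = (\<Sum>j<n. conjugate (vec n (\<lambda>i. cnj (Y j i))) \<bullet> (\<psi> *\<^sub>v vec n (\<lambda>i. cnj (Y j i))))"
  proof -
    have "Bf n Y Y \<psi> = (\<Sum>j<n. \<Sum>i<n. \<Sum>l<n. cnj (Y j i) * Y j l * \<psi> $$ (l,i))"
      unfolding Bf_def by (rule sum.swap)
    also have "\<dots> = (\<Sum>j<n. \<Sum>l<n. \<Sum>i<n. cnj (Y j i) * Y j l * \<psi> $$ (l,i))"
      by (intro sum.cong refl sum.swap)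
    also have "\<dots> = (\<Sum>j<n. conjugate (vec n (\<lambda>i. cnj (Y j i))) \<bullet> (\<psi> *\<^sub>v vec n (\<lambda>i. cnj (Y j i))))"
      using assms unfolding psd_mat_def
      by (auto simp: scalar_prod_def sum_distrib_left lessThan_atLeast0 mult_ac intro!: sum.cong)
    finally show ?thesis .
  qed
  moreover have "\<forall>j. 0 \<le> Re (conjugate (vec n (\<lambda>i. cnj (Y j i))) \<bullet> (\<psi> *\<^sub>v vec n (\<lambda>i. cnj (Y j i))))"
    using assms unfolding psd_mat_def by auto
  ultimately show ?thesis by (simp add: Re_sum sum_nonneg)
qed

lemma Bf_add_left: "Bf n (\<lambda>j i. X j i + X' j i) Y \<psi> = Bf n X Y \<psi> + Bf n X' Y \<psi>"
  by (simp add: Bf_def sum.distrib ring_distribs)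
lemma Bf_add_right: "Bf n Y (\<lambda>j i. X j i + X' j i) \<psi> = Bf n Y X \<psi> + Bf n Y X' \<psi>"
  by (simp add: Bf_def sum.distrib ring_distribs)
lemma Bf_zero_left: "Bf n (\<lambda>j i. 0) Y \<psi> = 0" by (simp add: Bf_def)
lemma Bf_zero_right: "Bf n Y (\<lambda>j i. 0) \<psi> = 0" by (simp add: Bf_def)

lemma Bf_sum_left: "finite S \<Longrightarrow> Bf n (\<lambda>j i. \<Sum>h\<in>S. X h j i) Y \<psi> = (\<Sum>h\<in>S. Bf n (X h) Y \<psi>)"
  by (induction S rule: finite_induct) (simp_all add: Bf_zero_left Bf_add_left)
lemma Bf_sum_right: "finite S \<Longrightarrow> Bf n Y (\<lambda>j i. \<Sum>h\<in>S. X h j i) \<psi> = (\<Sum>h\<in>S. Bf n Y (X h) \<psi>)"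
  by (induction S rule: finite_induct) (simp_all add: Bf_zero_right Bf_add_right)

lemma Bf_diff: "Bf n (\<lambda>j i. X j i - Y j i) (\<lambda>j i. X j i - Y j i) \<psi> =
   Bf n X X \<psi> - Bf n X Y \<psi> - Bf n Y X \<psi> + Bf n Y Y \<psi>"
  by (simp add: Bf_def sum_subtractf sum.distrib algebra_simps)

lemma Bf_scale: "Bf n (\<lambda>j i. c * X j i) (\<lambda>j i. c * X j i) \<psi> = (cnj c * c) * Bf n X X \<psi>"
  by (simp add: Bf_def sum_distrib_left mult_ac)

lemma Bf_jensen: assumes "finite S" "psd_mat n \<psi>"
  shows "Re (Bf n (\<lambda>j i. \<Sum>h\<in>S. X h j i) (\<lambda>j i. \<Sum>h\<in>S. X h j i) \<psi>)
     \<le> real (card S) * (\<Sum>h\<in>S. Re (Bf n (X h) (X h) \<psi>))"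
proof -
  let ?B = "\<lambda>h h'. Re (Bf n (X h) (X h') \<psi>)"
  have "0 \<le> (\<Sum>h\<in>S. \<Sum>h'\<in>S. Re (Bf n (\<lambda>j i. X h j i - X h' j i) (\<lambda>j i. X h j i - X h' j i) \<psi>))"
    by (intro sum_nonneg Bf_pos assms)
  also have "\<dots> = (\<Sum>h\<in>S. \<Sum>h'\<in>S. ?B h h + ?B h' h' - ?B h h' - ?B h' h)"
    by (intro sum.cong refl) (simp add: Bf_diff algebra_simps)
  also have "\<dots> = 2 * real (card S) * (\<Sum>h\<in>S. ?B h h) - 2 * (\<Sum>h\<in>S. \<Sum>h'\<in>S. ?B h h')"
  proof -
    have e1: "(\<Sum>h\<in>S. \<Sum>h'\<in>S. ?B h h + ?B h' h' - ?B h h' - ?B h' h) =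
      (\<Sum>h\<in>S. \<Sum>h'\<in>S. ?B h h) + (\<Sum>h\<in>S. \<Sum>h'\<in>S. ?B h' h') - (\<Sum>h\<in>S. \<Sum>h'\<in>S. ?B h h') - (\<Sum>h\<in>S. \<Sum>h'\<in>S. ?B h' h)"
      by (simp only: sum.distrib sum_subtractf)
    have e2: "(\<Sum>h\<in>S. \<Sum>h'\<in>S. ?B h' h) = (\<Sum>h\<in>S. \<Sum>h'\<in>S. ?B h h')"
      by (rule sum.swap)
    have e3: "(\<Sum>h\<in>S. \<Sum>h'\<in>S. ?B h h) = real (card S) * (\<Sum>h\<in>S. ?B h h)"
      by (simp add: sum_distrib_left mult.commute)
    have e4: "(\<Sum>h\<in>S. \<Sum>h'\<in>S. ?B h' h') = real (card S) * (\<Sum>h\<in>S. ?B h h)"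
      by (simp add: sum_distrib_left mult.commute)
    show ?thesis unfolding e1 e2 e3 e4 by simp
  qed
  also have "(\<Sum>h\<in>S. \<Sum>h'\<in>S. ?B h h') = Re (Bf n (\<lambda>j i. \<Sum>h\<in>S. X h j i) (\<lambda>j i. \<Sum>h\<in>S. X h j i) \<psi>)"
    by (simp add: Bf_sum_left Bf_sum_right assms Re_sum)
  finally show ?thesis by simp
qed



lemma sum_divmod: "(\<Sum>p<(k::nat)*(n::nat). F (p div n) (p mod n)) = (\<Sum>j<k. \<Sum>a<n. (F j a :: 'a::comm_monoid_add))"
proof (induction k)
  case 0 then show ?case by simp
next
  case (Suc k)
  have "(\<Sum>p<Suc k*n. F (p div n) (p mod n)) = (\<Sum>p<k*n. F (p div n) (p mod n)) + (\<Sum>p\<in>{k*n..<k*n+n}. F (p div n) (p mod n))"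
  proof -
    have "Suc k * n = k*n + n" by simp
    then show ?thesis unfolding lessThan_atLeast0
      by (simp only:) (rule sum.atLeastLessThan_concat[symmetric]; simp)
  qed
  also have "(\<Sum>p\<in>{k*n..<k*n+n}. F (p div n) (p mod n)) = (\<Sum>a<n. F k a)"
  proof -
    have "(\<Sum>p\<in>{k*n..<k*n+n}. F (p div n) (p mod n)) = (\<Sum>a\<in>{0..<n}. F ((a + k*n) div n) ((a+k*n) mod n))"
      using sum.shift_bounds_nat_ivl[of "\<lambda>p. F (p div n) (p mod n)" 0 "k*n" n] by (simp add: add.commute)
    also have "\<dots> = (\<Sum>a<n. F k a)"
      by (auto simp: lessThan_atLeast0 intro!: sum.cong)
    finally show ?thesis .
  qed
  finally show ?case using Suc by simp
qed



locale rsetup = group G for G :: "('g,'b) monoid_scheme" (structure) +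
  fixes el :: "nat \<Rightarrow> 'g" and k n :: nat
  assumes bij: "bij_betw el {..<k} (carrier G)"
begin

definition idx where "idx x = inv_into {..<k} el x"

lemma idx_lt: "x \<in> carrier G \<Longrightarrow> idx x < k"
  unfolding idx_def using bij by (metis bij_betw_def inv_into_into lessThan_iff)
lemma el_idx[simp]: "x \<in> carrier G \<Longrightarrow> el (idx x) = x"
  unfolding idx_def using bij by (simp add: bij_betw_inv_into_right)
lemma el_in: "j < k \<Longrightarrow> el j \<in> carrier G"
  using bij by (auto dest: bij_betwE)

definition sig where "sig g p = idx (el (p div n) \<otimes>\<^bsub>G\<^esub> g) * n + p mod n"

lemma pdiv: assumes "p < k*n" shows "p div n < k" "p mod n < n" "0 < n"
proof -
  show "0 < n" using assms by (cases n) auto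
  then show "p mod n < n" by simp
  show "p div n < k" using assms by (metis less_mult_imp_div_less)
qed

lemma sig_div: "g \<in> carrier G \<Longrightarrow> p < k*n \<Longrightarrow> sig g p div n = idx (el (p div n) \<otimes> g)"
  using pdiv[of p] unfolding sig_def by simp
lemma sig_mod: "g \<in> carrier G \<Longrightarrow> p < k*n \<Longrightarrow> sig g p mod n = p mod n"
  using pdiv[of p] unfolding sig_def by simp

lemma sig_lt: assumes "g \<in> carrier G" "p < k*n" shows "sig g p < k*n"
proof -
  have i: "idx (el (p div n) \<otimes> g) < k" using assms pdiv[OF assms(2)] by (intro idx_lt) (auto intro: el_in)
  have "sig g p < idx (el (p div n) \<otimes> g) * n + n" unfolding sig_def using pdiv[OF assms(2)] by simp
  also have "\<dots> = Suc (idx (el (p div n) \<otimes> g)) * n" by simp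
  also have "\<dots> \<le> k * n" using i by (intro mult_le_mono1) simp
  finally show ?thesis .
qed

lemma sig_comp: assumes "g \<in> carrier G" "h \<in> carrier G" "p < k*n"
  shows "sig h (sig g p) = sig (g \<otimes> h) p"
proof -
  have e: "el (p div n) \<in> carrier G" using pdiv[OF assms(3)] el_in by auto
  have "sig h (sig g p) = idx (el (sig g p div n) \<otimes> h) * n + sig g p mod n"
    by (simp add: sig_def)
  also have "\<dots> = idx (el (p div n) \<otimes> g \<otimes> h) * n + p mod n"
    using assms e by (simp add: sig_div sig_mod)
  also have "\<dots> = sig (g \<otimes> h) p" using assms e by (simp add: sig_def m_assoc)
  finally show ?thesis .
qed

lemma sig_one: assumes "p < k*n" shows "sig \<one> p = p"
proof -
  have "p div n < k" using pdiv[OF assms] by simp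
  then have "idx (el (p div n)) = p div n"
    unfolding idx_def using bij by (simp add: bij_betw_inv_into_left)
  then show ?thesis unfolding sig_def using el_in pdiv[OF assms] by simp
qed

definition piM where "piM g = mat (k*n) (k*n) (\<lambda>(p,q). if q = sig g p then 1 else (0::complex))"

lemma piM_mult: assumes "g \<in> carrier G" "h \<in> carrier G" shows "piM (g \<otimes> h) = piM g * piM h"
proof (rule eq_matI)
  fix p q assume "p < dim_row (piM g * piM h)" "q < dim_col (piM g * piM h)"
  then have p: "p < k*n" and q: "q < k*n" by (auto simp: piM_def)
  have "(piM g * piM h) $$ (p,q) = (\<Sum>r<k*n. (if r = sig g p then 1 else 0) * (if q = sig h r then 1 else (0::complex)))"
    using p q by (simp add: piM_def scalar_prod_def lessThan_atLeast0)
  also have "\<dots> = (if q = sig h (sig g p) then 1 else 0)"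
    using sig_lt[OF assms(1) p] by (simp add: if_distrib[of "\<lambda>x. x * _"] sum.delta cong: if_cong)
  also have "\<dots> = piM (g \<otimes> h) $$ (p,q)" using p q assms by (simp add: piM_def sig_comp)
  finally show "piM (g \<otimes> h) $$ (p,q) = (piM g * piM h) $$ (p,q)" by simp
qed (auto simp: piM_def)

lemma piM_one: "piM \<one> = 1\<^sub>m (k*n)"
  by (rule eq_matI) (auto simp: piM_def sig_one)

lemma piM_adj: assumes "g \<in> carrier G" shows "mat_adjoint (piM g) = piM (inv g)"
proof (rule eq_matI)
  fix p q assume "p < dim_row (piM (inv g))" "q < dim_col (piM (inv g))"
  then have p: "p < k*n" and q: "q < k*n" by (auto simp: piM_def)
  have "(p = sig g q) = (q = sig (inv g) p)"
  proof
    assume "p = sig g q" then show "q = sig (inv g) p"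
      using sig_comp[of g "inv g" q] assms q by (simp add: sig_one)
  next
    assume "q = sig (inv g) p" then show "p = sig g q"
      using sig_comp[of "inv g" g p] assms p by (simp add: sig_one)
  qed
  then show "mat_adjoint (piM g) $$ (p,q) = piM (inv g) $$ (p,q)"
    using p q by (simp add: piM_def)
qed (auto simp: piM_def)

lemma piM_unitary: assumes "g \<in> carrier G" shows "unitary_mat (k*n) (piM g)"
  unfolding unitary_mat_def using assms
  by (simp add: piM_adj piM_mult[symmetric] piM_one) (simp add: piM_def)

lemma piM_rep: "unitary_rep G (k*n) piM"
  unfolding unitary_rep_def by (simp add: piM_unitary piM_mult)

end


context rsetup begin

lemma k_pos: "0 < k"
proof (rule ccontr)
  assume "\<not> 0 < k" then have "k = 0" by simp
  then have "carrier G = {}" using bij by (simp add: bij_betw_def)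
  then show False using one_closed by simp
qed

lemma k_card: "k = card (carrier G)" using bij bij_betw_same_card by fastforce

lemma sum_G: "(\<Sum>j<k. F (el j)) = (\<Sum>h\<in>carrier G. F h)"
  using sum.reindex_bij_betw[OF bij, of F] by simp

definition cc :: complex where "cc = complex_of_real (1 / sqrt (real k))"

lemma cc2: "cnj cc * cc = complex_of_real (1 / real k)"
proof -
  have r: "(1/sqrt(real k)) * (1/sqrt(real k)) = 1/real k" using k_pos
    by (simp add: real_sqrt_mult_self)
  show ?thesis unfolding cc_def by (simp only: complex_cnj_complex_of_real of_real_mult[symmetric] r)
qed

definition VM :: "('g \<Rightarrow> complex mat) \<Rightarrow> complex mat" where
  "VM f = mat (k*n) n (\<lambda>(p,b). cc * f (el (p div n)) $$ (p mod n, b))"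

lemma VM_iso: assumes U: "\<forall>g\<in>carrier G. unitary_mat n (f g)" shows "isometry_mat n (k*n) (VM f)"
  unfolding isometry_mat_def
proof
  show "VM f \<in> carrier_mat (k*n) n" by (simp add: VM_def)
  show "mat_adjoint (VM f) * VM f = 1\<^sub>m n"
  proof (rule eq_matI)
    fix b b' assume "b < dim_row (1\<^sub>m n)" "b' < dim_col (1\<^sub>m n)"
    then have b: "b < n" and b': "b' < n" by auto
    have "(mat_adjoint (VM f) * VM f) $$ (b,b') =
      (\<Sum>p<k*n. (\<lambda>j a. cnj (cc * f (el j) $$ (a, b)) * (cc * f (el j) $$ (a, b'))) (p div n) (p mod n))"
      using b b' by (simp add: VM_def scalar_prod_def lessThan_atLeast0)
    also have "\<dots> = (\<Sum>j<k. \<Sum>a<n. cnj (cc * f (el j) $$ (a, b)) * (cc * f (el j) $$ (a, b')))"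
      by (rule sum_divmod)
    also have "\<dots> = (\<Sum>j<k. (cnj cc * cc) * (mat_adjoint (f (el j)) * f (el j)) $$ (b,b'))"
    proof (intro sum.cong refl)
      fix j assume "j \<in> {..<k}"
      then have "f (el j) \<in> carrier_mat n n" using U el_in unfolding unitary_mat_def by auto
      then show "(\<Sum>a<n. cnj (cc * f (el j) $$ (a, b)) * (cc * f (el j) $$ (a, b'))) =
         (cnj cc * cc) * (mat_adjoint (f (el j)) * f (el j)) $$ (b,b')"
        using b b' by (simp add: scalar_prod_def sum_distrib_left lessThan_atLeast0 mult_ac)
    qed
    also have "\<dots> = (\<Sum>j<k. (cnj cc * cc) * (1\<^sub>m n) $$ (b,b'))"
      using U el_in unfolding unitary_mat_def by (intro sum.cong) auto
    also have "\<dots> = 1\<^sub>m n $$ (b,b')"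
      using b b' k_pos by (simp add: cc2)
    finally show "(mat_adjoint (VM f) * VM f) $$ (b,b') = 1\<^sub>m n $$ (b,b')" .
  qed (auto simp: VM_def)
qed

lemma piV: assumes "g \<in> carrier G"
  shows "piM g * VM f = mat (k*n) n (\<lambda>(p,b). cc * f (el (p div n) \<otimes> g) $$ (p mod n, b))"
proof (rule eq_matI)
  fix p b assume "p < dim_row (mat (k*n) n (\<lambda>(p,b). cc * f (el (p div n) \<otimes> g) $$ (p mod n, b)))"
    "b < dim_col (mat (k*n) n (\<lambda>(p,b). cc * f (el (p div n) \<otimes> g) $$ (p mod n, b)))"
  then have p: "p < k*n" and b: "b < n" by auto
  have e: "el (p div n) \<otimes> g \<in> carrier G" using assms el_in pdiv[OF p] by auto
  have "(piM g * VM f) $$ (p,b) = (\<Sum>r<k*n. (if r = sig g p then 1 else 0) * VM f $$ (r,b))"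
    using p b by (simp add: piM_def VM_def scalar_prod_def lessThan_atLeast0)
  also have "\<dots> = VM f $$ (sig g p, b)"
    using sig_lt[OF assms p] by (simp add: if_distrib[of "\<lambda>x. x * _"] sum.delta cong: if_cong)
  also have "\<dots> = cc * f (el (p div n) \<otimes> g) $$ (p mod n, b)"
    using sig_lt[OF assms p] b e assms p by (simp add: VM_def sig_div sig_mod)
  finally show "(piM g * VM f) $$ (p,b) = mat (k*n) n (\<lambda>(p,b). cc * f (el (p div n) \<otimes> g) $$ (p mod n, b)) $$ (p,b)"
    using p b by simp
qed (auto simp: piM_def VM_def)

lemma A_entry: assumes U: "\<forall>g\<in>carrier G. unitary_mat n (f g)" and g: "g \<in> carrier G"
  and b: "b < n" and b': "b' < n"
  shows "(mat_adjoint (VM f) * piM g * VM f) $$ (b,b') =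
     complex_of_real (1 / real k) * (\<Sum>h\<in>carrier G. (mat_adjoint (f h) * f (h \<otimes> g)) $$ (b,b'))"
proof -
  have "mat_adjoint (VM f) * piM g * VM f = mat_adjoint (VM f) * (piM g * VM f)"
    by (rule assoc_mult_mat[of _ n "k*n" _ "k*n" _ n]) (auto simp: VM_def piM_def)
  also have "\<dots> $$ (b,b') =
      (\<Sum>p<k*n. (\<lambda>j a. cnj (cc * f (el j) $$ (a, b)) * (cc * f (el j \<otimes> g) $$ (a, b'))) (p div n) (p mod n))"
    unfolding piV[OF g] using b b' g by (simp add: VM_def scalar_prod_def lessThan_atLeast0)
  also have "\<dots> = (\<Sum>j<k. \<Sum>a<n. cnj (cc * f (el j) $$ (a, b)) * (cc * f (el j \<otimes> g) $$ (a, b')))"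
    by (rule sum_divmod)
  also have "\<dots> = (\<Sum>j<k. (cnj cc * cc) * (mat_adjoint (f (el j)) * f (el j \<otimes> g)) $$ (b,b'))"
  proof (intro sum.cong refl)
    fix j assume "j \<in> {..<k}"
    then have "f (el j) \<in> carrier_mat n n" "f (el j \<otimes> g) \<in> carrier_mat n n"
      using U el_in g unfolding unitary_mat_def by auto
    then show "(\<Sum>a<n. cnj (cc * f (el j) $$ (a, b)) * (cc * f (el j \<otimes> g) $$ (a, b'))) =
       (cnj cc * cc) * (mat_adjoint (f (el j)) * f (el j \<otimes> g)) $$ (b,b')"
      using b b' by (simp add: scalar_prod_def sum_distrib_left lessThan_atLeast0 mult_ac)
  qed
  also have "\<dots> = complex_of_real (1 / real k) * (\<Sum>h\<in>carrier G. (mat_adjoint (f h) * f (h \<otimes> g)) $$ (b,b'))"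
    by (simp only: cc2 sum_distrib_left[symmetric] sum_G[of "\<lambda>h. (mat_adjoint (f h) * f (h \<otimes> g)) $$ (b,b')"])
  finally show ?thesis .
qed

end

lemma Bf_cong: "(\<And>j i. j < n \<Longrightarrow> i < n \<Longrightarrow> X j i = X' j i) \<Longrightarrow> (\<And>j i. j < n \<Longrightarrow> i < n \<Longrightarrow> Y j i = Y' j i)
  \<Longrightarrow> Bf n X Y \<psi> = Bf n X' Y' \<psi>"
  unfolding Bf_def by (intro sum.cong refl) auto

lemma adj_mult: assumes "A \<in> carrier_mat a b" "B \<in> carrier_mat b c"
  shows "mat_adjoint (A * B) = mat_adjoint B * mat_adjoint (A :: complex mat)"
proof (rule eq_matI)
  fix i j assume "i < dim_row (mat_adjoint B * mat_adjoint A)" "j < dim_col (mat_adjoint B * mat_adjoint A)"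
  then have i: "i < c" and j: "j < a" using assms by auto
  show "mat_adjoint (A * B) $$ (i, j) = (mat_adjoint B * mat_adjoint A) $$ (i, j)"
    using assms i j by (simp add: scalar_prod_def cnj_sum mult.commute)
qed (use assms in auto)
lemma adj_adj: "mat_adjoint (mat_adjoint (A :: complex mat)) = A"
  by (rule eq_matI) auto

lemma adj_carrier: "A \<in> carrier_mat a b \<Longrightarrow> mat_adjoint (A::complex mat) \<in> carrier_mat b a"
  unfolding carrier_mat_def by simp

lemma sn_unitary: assumes U: "unitary_mat n U" and D: "D \<in> carrier_mat n n"
  shows "state_norm_sq (mat_adjoint U * D) \<psi> = state_norm_sq D \<psi>"
proof -
  have Uc: "U \<in> carrier_mat n n" and UU: "U * mat_adjoint U = 1\<^sub>m n" using U unfolding unitary_mat_def by simp_all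
  have aU: "mat_adjoint U \<in> carrier_mat n n" using Uc by (rule adj_carrier)
  have aD: "mat_adjoint D \<in> carrier_mat n n" using D by (rule adj_carrier)
  have e1: "mat_adjoint (mat_adjoint U * D) = mat_adjoint D * U"
    unfolding adj_mult[OF aU D] adj_adj ..
  have e2: "mat_adjoint D * U * (mat_adjoint U * D) = mat_adjoint D * (U * (mat_adjoint U * D))"
  proof -
    have "mat_adjoint U * D \<in> carrier_mat n n" using aU D by simp
    then show ?thesis by (rule assoc_mult_mat[OF aD Uc])
  qed
  have e3: "U * (mat_adjoint U * D) = (U * mat_adjoint U) * D"
    by (rule assoc_mult_mat[OF Uc aU D, symmetric])
  have e4: "(U * mat_adjoint U) * D = D" unfolding UU using D by (rule left_mult_one_mat)
  have "mat_adjoint (mat_adjoint U * D) * (mat_adjoint U * D) = mat_adjoint D * D"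
    unfolding e1 e2 e3 e4 ..
  then show ?thesis unfolding state_norm_sq_def by (simp only:)
qed

context rsetup begin

lemma per_g: assumes U: "\<forall>g\<in>carrier G. unitary_mat n (f g)" and g: "g \<in> carrier G"
  and \<psi>: "density_op n \<psi>"
  shows "state_norm_sq (f g - mat_adjoint (VM f) * piM g * VM f) \<psi> \<le>
     (1 / real k) * (\<Sum>h\<in>carrier G. state_norm_sq (f h * f g - f (h \<otimes> g)) \<psi>)"
proof -
  have psd: "psd_mat n \<psi>" and \<psi>c: "\<psi> \<in> carrier_mat n n" using \<psi> unfolding density_op_def psd_mat_def by auto
  have fc: "\<And>h. h \<in> carrier G \<Longrightarrow> f h \<in> carrier_mat n n" using U unfolding unitary_mat_def by auto
  have fu: "\<And>h. h \<in> carrier G \<Longrightarrow> mat_adjoint (f h) * f h = 1\<^sub>m n" using U unfolding unitary_mat_def by auto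
  define A where "A = mat_adjoint (VM f) * piM g * VM f"
  have Ac: "A \<in> carrier_mat n n" unfolding A_def by (auto simp: VM_def piM_def)
  define D where "D h = f h * f g - f (h \<otimes> g)" for h
  define Y where "Y h = mat_adjoint (f h) * D h" for h
  have Dc: "h \<in> carrier G \<Longrightarrow> D h \<in> carrier_mat n n" for h
  proof -
    assume h: "h \<in> carrier G"
    have "f (h \<otimes> g) \<in> carrier_mat n n" using fc h g by simp
    then show ?thesis unfolding D_def by (rule minus_carrier_mat)
  qed
  have Yc: "h \<in> carrier G \<Longrightarrow> Y h \<in> carrier_mat n n" for h
  proof -
    assume h: "h \<in> carrier G"
    have "mat_adjoint (f h) \<in> carrier_mat n n" using fc[OF h] by (rule adj_carrier)
    then show ?thesis unfolding Y_def using Dc[OF h] by (rule mult_carrier_mat)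
  qed
  have Yeq: "Y h = f g - mat_adjoint (f h) * f (h \<otimes> g)" if h: "h \<in> carrier G" for h
  proof -
    have c1: "mat_adjoint (f h) \<in> carrier_mat n n" using adj_carrier[OF fc[OF h]] .
    have "Y h = mat_adjoint (f h) * (f h * f g) - mat_adjoint (f h) * f (h \<otimes> g)"
    proof -
      have "f h * f g \<in> carrier_mat n n" "f (h \<otimes> g) \<in> carrier_mat n n" using mult_carrier_mat[OF fc[OF h] fc[OF g]] fc[OF m_closed[OF h g]] by auto
      then show ?thesis unfolding Y_def D_def by (rule mult_minus_distrib_mat[OF c1])
    qed
    also have "mat_adjoint (f h) * (f h * f g) = (mat_adjoint (f h) * f h) * f g"
      using fc[OF h] fc[OF g] by (rule assoc_mult_mat[OF c1, symmetric])
    also have "\<dots> = f g" using fu[OF h] fc[OF g] by simp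
    finally show ?thesis .
  qed
  have ent: "(f g - A) $$ (j,i) = complex_of_real (1 / real k) * (\<Sum>h\<in>carrier G. Y h $$ (j,i))"
    if j: "j < n" and i: "i < n" for j i
  proof -
    have "(\<Sum>h\<in>carrier G. Y h $$ (j,i)) = (\<Sum>h\<in>carrier G. f g $$ (j,i) - (mat_adjoint (f h) * f (h \<otimes> g)) $$ (j,i))"
    proof (intro sum.cong refl)
      fix h assume h: "h \<in> carrier G"
      show "Y h $$ (j,i) = f g $$ (j,i) - (mat_adjoint (f h) * f (h \<otimes> g)) $$ (j,i)"
        using Yeq[OF h] fc[OF h] fc[OF g] fc[OF m_closed[OF h g]] i j by simp
    qed
    also have "\<dots> = of_nat k * f g $$ (j,i) - (\<Sum>h\<in>carrier G. (mat_adjoint (f h) * f (h \<otimes> g)) $$ (j,i))"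
      by (simp add: sum_subtractf k_card)
    finally have s: "(\<Sum>h\<in>carrier G. Y h $$ (j,i)) = of_nat k * f g $$ (j,i) - (\<Sum>h\<in>carrier G. (mat_adjoint (f h) * f (h \<otimes> g)) $$ (j,i))" .
    have "(f g - A) $$ (j,i) = f g $$ (j,i) - A $$ (j,i)" using Ac fc[OF g] i j by simp
    also have "A $$ (j,i) = complex_of_real (1 / real k) * (\<Sum>h\<in>carrier G. (mat_adjoint (f h) * f (h \<otimes> g)) $$ (j,i))"
      unfolding A_def by (rule A_entry[OF U g j i])
    finally show ?thesis unfolding s using k_pos by (simp add: field_simps)
  qed
  have "state_norm_sq (f g - A) \<psi> = Re (Bf n (\<lambda>j i. (f g - A)$$(j,i)) (\<lambda>j i. (f g - A)$$(j,i)) \<psi>)"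
    using minus_carrier_mat[OF Ac] \<psi>c by (rule sn_Bf)
  also have "\<dots> = Re (Bf n (\<lambda>j i. complex_of_real (1 / real k) * (\<Sum>h\<in>carrier G. Y h $$ (j,i)))
       (\<lambda>j i. complex_of_real (1 / real k) * (\<Sum>h\<in>carrier G. Y h $$ (j,i))) \<psi>)"
    by (intro arg_cong[where f=Re] Bf_cong) (simp_all add: ent)
  also have "\<dots> = (1 / real k) * (1 / real k) * Re (Bf n (\<lambda>j i. \<Sum>h\<in>carrier G. Y h $$ (j,i))
       (\<lambda>j i. \<Sum>h\<in>carrier G. Y h $$ (j,i)) \<psi>)"
    unfolding Bf_scale by (simp del: of_real_divide of_real_mult add: of_real_mult[symmetric])
  also have "\<dots> \<le> (1 / real k) * (1 / real k) * (real (card (carrier G)) * (\<Sum>h\<in>carrier G. Re (Bf n (\<lambda>j i. Y h $$ (j,i)) (\<lambda>j i. Y h $$ (j,i)) \<psi>)))"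
    by (intro mult_left_mono Bf_jensen psd) (use bij bij_betw_finite in blast, simp)
  also have "\<dots> = (1 / real k) * (\<Sum>h\<in>carrier G. state_norm_sq (Y h) \<psi>)"
  proof -
    have "(\<Sum>h\<in>carrier G. Re (Bf n (\<lambda>j i. Y h $$ (j,i)) (\<lambda>j i. Y h $$ (j,i)) \<psi>)) = (\<Sum>h\<in>carrier G. state_norm_sq (Y h) \<psi>)"
    proof (intro sum.cong refl)
      fix h assume h: "h \<in> carrier G"
      show "Re (Bf n (\<lambda>j i. Y h $$ (j,i)) (\<lambda>j i. Y h $$ (j,i)) \<psi>) = state_norm_sq (Y h) \<psi>"
        using sn_Bf[OF Yc[OF h] \<psi>c] by simp
    qed
    then show ?thesis using k_pos by (simp add: k_card[symmetric])
  qed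
  also have "\<dots> = (1 / real k) * (\<Sum>h\<in>carrier G. state_norm_sq (D h) \<psi>)"
    unfolding Y_def using U Dc by (intro arg_cong[where f="\<lambda>x. (1 / real k) * x"] sum.cong refl sn_unitary) auto
  finally show ?thesis unfolding A_def D_def .
qed

end

theorem theorem3p1:
  fixes G :: "('g, 'b) monoid_scheme" and n :: nat and f :: "'g \<Rightarrow> complex mat"
  assumes "group G" and "finite (carrier G)"
    and "\<forall>g \<in> carrier G. unitary_mat n (f g)"
  shows "\<exists>m V \<pi>. isometry_mat n m V \<and> unitary_rep G m \<pi> \<and>
    (\<forall>\<mu> \<psi> (\<epsilon>::real). prob_weights G \<mu> \<longrightarrow> density_op n \<psi> \<longrightarrow> \<epsilon> \<ge> 0 \<longrightarrow>
      (\<Sum>g \<in> carrier G. \<mu> g * ((1 / real (card (carrier G))) *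
          (\<Sum>h \<in> carrier G. state_norm_sq (f h * f g - f (h \<otimes>\<^bsub>G\<^esub> g)) \<psi>))) \<le> \<epsilon> \<longrightarrow>
      (\<Sum>g \<in> carrier G. \<mu> g * state_norm_sq (f g - mat_adjoint V * \<pi> g * V) \<psi>) \<le> \<epsilon>)"
proof -
  obtain el where "bij_betw el {0..<card (carrier G)} (carrier G)"
    using ex_bij_betw_nat_finite[OF assms(2)] by blast
  then have bij: "bij_betw el {..<card (carrier G)} (carrier G)" by (simp add: lessThan_atLeast0)
  interpret R: rsetup G el "card (carrier G)" n
    using assms(1) bij by (simp add: rsetup_def rsetup_axioms_def)
  show ?thesis
  proof (intro exI conjI allI impI)
    show "isometry_mat n (card (carrier G) * n) (R.VM f)" by (rule R.VM_iso[OF assms(3)])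
    show "unitary_rep G (card (carrier G) * n) R.piM" by (rule R.piM_rep)
    fix \<mu> \<psi> and \<epsilon> :: real
    assume mu: "prob_weights G \<mu>" and \<psi>: "density_op n \<psi>" and e: "0 \<le> \<epsilon>"
      and H: "(\<Sum>g \<in> carrier G. \<mu> g * ((1 / real (card (carrier G))) *
          (\<Sum>h \<in> carrier G. state_norm_sq (f h * f g - f (h \<otimes>\<^bsub>G\<^esub> g)) \<psi>))) \<le> \<epsilon>"
    have "(\<Sum>g \<in> carrier G. \<mu> g * state_norm_sq (f g - mat_adjoint (R.VM f) * R.piM g * R.VM f) \<psi>)
       \<le> (\<Sum>g \<in> carrier G. \<mu> g * ((1 / real (card (carrier G))) *
          (\<Sum>h \<in> carrier G. state_norm_sq (f h * f g - f (h \<otimes>\<^bsub>G\<^esub> g)) \<psi>)))"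
    proof (rule sum_mono)
      fix g assume g: "g \<in> carrier G"
      have "0 \<le> \<mu> g" using mu g unfolding prob_weights_def by auto
      then show "\<mu> g * state_norm_sq (f g - mat_adjoint (R.VM f) * R.piM g * R.VM f) \<psi>
        \<le> \<mu> g * ((1 / real (card (carrier G))) *
          (\<Sum>h \<in> carrier G. state_norm_sq (f h * f g - f (h \<otimes>\<^bsub>G\<^esub> g)) \<psi>))"
        by (intro mult_left_mono R.per_g[OF assms(3) g \<psi>])
    qed
    then show "(\<Sum>g \<in> carrier G. \<mu> g * state_norm_sq (f g - mat_adjoint (R.VM f) * R.piM g * R.VM f) \<psi>) \<le> \<epsilon>"
      using H by linarith
  qed
qed

end
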